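(* Let $0\leq B<1$, $q\geq3$, $\Delta\geq3$, $d=\Delta-1$, and let $(R_1,\dots,R_q,C_1,\dots,C_q)$ be a positive solution of the system \[R_i\propto\Big(BC_i+\sum_{j\neq i}C_j\Big)^{d},\qquad C_j\propto\Big(BR_j+\sum_{i\neq j}R_i\Big)^{d}\qquad(i,j\in[q]).\] Let $t_R$ be the number of distinct values among $R_1,\dots,R_q$ and $t_C$ the number of distinct values among $C_1,\dots,C_q$. Then $t_R,t_C\leq3$ and $t_R=t_C$.
   Context: Proportionality constants in the system are independent of $i$ (resp. $j$). This is the tree recursion fixpoint system of the antiferromagnetic $q$-state Potts model with parameter $B$ ($B=0$: colorings). *)

theory Defs
  imports Main Complex_Main
begin

definition potts_fixpoint :: "nat \<Rightarrow> real \<Rightarrow> nat \<Rightarrow> (nat \<Rightarrow> real) \<Rightarrow> (nat \<Rightarrow> real) \<Rightarrow> bool" where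
  "potts_fixpoint q B d R C \<longleftrightarrow>
     (\<forall>i<q. R i > 0) \<and> (\<forall>j<q. C j > 0) \<and>
     (\<exists>a>0. \<forall>i<q. R i = a * (B * C i + (\<Sum>j\<in>{..<q}-{i}. C j)) ^ d) \<and>
     (\<exists>b>0. \<forall>j<q. C j = b * (B * R j + (\<Sum>i\<in>{..<q}-{j}. R i)) ^ d)"

end

theory Submission imports Defs begin

lemma rolle_real:
  fixes f f' :: "real \<Rightarrow> real"
  assumes "a < b" "f a = f b" "\<And>x. a \<le> x \<Longrightarrow> x \<le> b \<Longrightarrow> (f has_real_derivative f' x) (at x)"
  shows "\<exists>z. a < z \<and> z < b \<and> f' z = 0"
proof -
  have "continuous_on {a..b} f"
    using assms(3) by (meson DERIV_isCont atLeastAtMost_iff continuous_at_imp_continuous_on)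
  moreover have "\<And>x. a < x \<Longrightarrow> x < b \<Longrightarrow> f differentiable (at x)"
    using assms(3) real_differentiable_def by (meson less_imp_le)
  ultimately obtain z where "a < z" "z < b" "DERIV f z :> 0"
    using Rolle[OF assms(1,2)] by blast
  moreover have "DERIV f z :> f' z" using assms(3) \<open>a<z\<close> \<open>z<b\<close> by simp
  ultimately show ?thesis using DERIV_unique by blast
qed

lemma four_sorted:
  fixes S :: "real set"
  assumes "finite S" "card S \<ge> 4"
  shows "\<exists>a b c d. a \<in> S \<and> b \<in> S \<and> c \<in> S \<and> d \<in> S \<and> a < b \<and> b < c \<and> c < d"
proof -
  define xs where "xs = sorted_list_of_set S"
  have l: "length xs = card S" unfolding xs_def by simp
  have s: "sorted_wrt (<) xs" unfolding xs_def by simp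
  have st: "set xs = S" unfolding xs_def using assms(1) by simp
  have "xs!0 < xs!1" "xs!1 < xs!2" "xs!2 < xs!3"
    using s l assms(2) by (auto simp: sorted_wrt_iff_nth_less)
  moreover have "xs!0 \<in> S" "xs!1 \<in> S" "xs!2 \<in> S" "xs!3 \<in> S"
    using st l assms(2) by (auto intro!: nth_mem[of _ xs, simplified st])
  ultimately show ?thesis by blast
qed


lemma deriv_F:
  fixes k b c0 Sr B e y :: real and d :: nat
  assumes "y > 0"
  shows "((\<lambda>y. c0 - k * y powr e - b * (Sr - (1-B)*y)^d) has_real_derivative
     (- k * (e * y powr (e-1)) + b * real d * (1-B) * (Sr - (1-B)*y)^(d-1))) (at y)"
proof -
  have 1: "((\<lambda>y. y powr e) has_real_derivative e * y powr (e-1)) (at y)"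
    using assms(1) by (rule has_real_derivative_powr)
  have 0: "((\<lambda>y. Sr - (1-B)*y) has_real_derivative (-(1-B))) (at y)"
    by (rule DERIV_diff[OF DERIV_const DERIV_cmult[OF DERIV_ident], THEN DERIV_cong]) simp
  have 2: "((\<lambda>y. (Sr - (1-B)*y)^d) has_real_derivative real d * ((-(1-B)) * (Sr - (1-B)*y)^(d-1))) (at y)"
    using DERIV_power[OF 0, of d] by simp
  have "((\<lambda>y. c0 - k * y powr e - b * (Sr - (1-B)*y)^d) has_real_derivative
     (0 - k * (e * y powr (e-1)) - b * (real d * ((-(1-B)) * (Sr - (1-B)*y)^(d-1))))) (at y)"
    by (intro DERIV_diff DERIV_const DERIV_cmult 1 2)
  then show ?thesis by (simp add: algebra_simps)
qed

lemma deriv_L: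
  fixes Sr B e z c :: real
  assumes "z > 0" "Sr - (1-B)*z > 0"
  shows "((\<lambda>z. c * ln (Sr - (1-B)*z) + (1-e) * ln z) has_real_derivative
     (c * (-(1-B) / (Sr - (1-B)*z)) + (1-e) / z)) (at z)"
proof -
  have 0: "((\<lambda>y. Sr - (1-B)*y) has_real_derivative (-(1-B))) (at z)"
    by (rule DERIV_diff[OF DERIV_const DERIV_cmult[OF DERIV_ident], THEN DERIV_cong]) simp
  have a: "((\<lambda>z. ln (Sr - (1-B)*z)) has_real_derivative (1 / (Sr - (1-B)*z)) * (-(1-B))) (at z)"
    using DERIV_chain2[OF DERIV_ln_divide[OF assms(2)] 0] .
  have b: "(ln has_real_derivative 1/z) (at z)" using DERIV_ln_divide[OF assms(1)] .
  have "((\<lambda>z. c * ln (Sr - (1-B)*z) + (1-e) * ln z) has_real_derivative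
     (c * ((1 / (Sr - (1-B)*z)) * (-(1-B))) + (1-e) * (1/z))) (at z)"
    by (intro DERIV_add DERIV_cmult a b)
  then show ?thesis by simp
qed

lemma no4:
  fixes k b c0 Sr B y1 y2 y3 y4 :: real and d :: nat and F :: "real \<Rightarrow> real"
  assumes k: "k > 0" and b: "b > 0" and B: "B < 1" and d: "d \<ge> 2"
  and F_def: "\<And>y. F y = c0 - k * y powr (1/real d) - b * (Sr - (1-B)*y)^d"
  and y: "0 < y1" "y1 < y2" "y2 < y3" "y3 < y4" "Sr - (1-B)*y4 > 0"
  and r: "F y1 = 0" "F y2 = 0" "F y3 = 0" "F y4 = 0"
  shows False
proof -
  define e where "e = 1 / real d"
  have e1: "1 - e > 0" using d unfolding e_def by (simp add: field_simps)
  define F' where "F' y = - k * (e * y powr (e-1)) + b * real d * (1-B) * (Sr - (1-B)*y)^(d-1)" for y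
  have dF: "(F has_real_derivative F' x) (at x)" if "x > 0" for x
  proof -
    have "F = (\<lambda>y. c0 - k * y powr e - b * (Sr - (1-B)*y)^d)" using F_def e_def by auto
    then show ?thesis unfolding F'_def using deriv_F[OF that] by simp
  qed
  have W: "Sr - (1-B)*z > 0" if "z \<le> y4" for z
  proof -
    have "(1-B)*z \<le> (1-B)*y4" using that B by (intro mult_left_mono) auto
    then show ?thesis using y(5) by linarith
  qed
  obtain z1 where z1: "y1 < z1" "z1 < y2" "F' z1 = 0"
    using rolle_real[of y1 y2 F F'] y r dF by force
  obtain z2 where z2: "y2 < z2" "z2 < y3" "F' z2 = 0"
    using rolle_real[of y2 y3 F F'] y r dF by force
  obtain z3 where z3: "y3 < z3" "z3 < y4" "F' z3 = 0"
    using rolle_real[of y3 y4 F F'] y r dF by force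
  define c where "c = real d - 1"
  have c: "c \<ge> 1" using d unfolding c_def by simp
  define L where "L z = c * ln (Sr - (1-B)*z) + (1-e) * ln z" for z
  define K where "K = ln (k*e) - ln (b * real d * (1-B))"
  have dpos: "real d > 0" using d by simp
  have ke: "k * e > 0" using k dpos unfolding e_def by simp
  have bd: "b * real d * (1-B) > 0" using b dpos B by simp
  have LK: "L z = K" if "0 < z" "z \<le> y4" "F' z = 0" for z
  proof -
    have Wz: "Sr - (1-B)*z > 0" using W that by simp
    have eq: "k * e * z powr (e-1) = b * real d * (1-B) * (Sr - (1-B)*z)^(d-1)"
      using that(3) unfolding F'_def by (simp add: algebra_simps)
    have "ln (k * e * z powr (e-1)) = ln (k*e) + (e-1) * ln z"
    proof -
      have "ln ((k * e) * z powr (e-1)) = ln (k*e) + ln (z powr (e-1))"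
        using ke that(1) by (intro ln_mult_pos) auto
      then show ?thesis using that(1) by (simp add: ln_powr)
    qed
    moreover have "ln (b * real d * (1-B) * (Sr - (1-B)*z)^(d-1)) = ln (b * real d * (1-B)) + c * ln (Sr - (1-B)*z)"
    proof -
      have "ln ((b * real d * (1-B)) * (Sr - (1-B)*z)^(d-1)) = ln (b * real d * (1-B)) + ln ((Sr - (1-B)*z)^(d-1))"
        using bd Wz by (intro ln_mult_pos) auto
      then show ?thesis using Wz d by (simp add: ln_realpow c_def of_nat_diff)
    qed
    moreover have "ln (k * e * z powr (e-1)) = ln (b * real d * (1-B) * (Sr - (1-B)*z)^(d-1))"
      using eq by simp
    ultimately show ?thesis unfolding L_def K_def by (simp add: algebra_simps)
  qed
  have L1: "L z1 = K" using LK z1 z2 z3 y by auto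
  have L2: "L z2 = K" using LK z1 z2 z3 y by auto
  have L3: "L z3 = K" using LK z1 z2 z3 y by auto
  define L' where "L' z = c * (-(1-B) / (Sr - (1-B)*z)) + (1-e) / z" for z
  have dL: "(L has_real_derivative L' x) (at x)" if "0 < x" "x \<le> y4" for x
    unfolding L_def L'_def using deriv_L[OF that(1) W[OF that(2)]] by simp
  obtain w1 where w1: "z1 < w1" "w1 < z2" "L' w1 = 0"
    using rolle_real[of z1 z2 L L'] L1 L2 dL z1 z2 z3 y by force
  obtain w2 where w2: "z2 < w2" "w2 < z3" "L' w2 = 0"
    using rolle_real[of z2 z3 L L'] L2 L3 dL z1 z2 z3 y by force
  have p1: "w1 > 0" "w1 < w2" "w2 \<le> y4" using w1 w2 z1 z3 y by auto
  have W1: "Sr - (1-B)*w1 > Sr - (1-B)*w2" using p1 B by simp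
  have W2: "Sr - (1-B)*w2 > 0" using W p1 by simp
  have a1: "(1-e)/w1 > (1-e)/w2" using p1 e1 by (simp add: divide_strict_left_mono)
  have a2: "(1-B) / (Sr - (1-B)*w1) < (1-B) / (Sr - (1-B)*w2)"
    using W1 W2 B by (intro divide_strict_left_mono mult_pos_pos) linarith+
  have a3: "c * ((1-B) / (Sr - (1-B)*w1)) < c * ((1-B) / (Sr - (1-B)*w2))"
    using a2 c by (intro mult_strict_left_mono) auto
  have Lf: "L' z = (1-e)/z - c*((1-B)/(Sr-(1-B)*z))" for z
    unfolding L'_def minus_divide_left[symmetric] by (simp only: mult_minus_right)
  have "L' w1 > L' w2" unfolding Lf using a1 a3 by linarith
  then show False using w1 w2 by simp
qed

lemma root_lemma:
  fixes a W :: real and d :: nat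
  assumes "a > 0" "W > 0" "d > 0"
  shows "(a * W^d) powr (1/real d) = a powr (1/real d) * W"
proof -
  have "(a * W^d) powr (1/real d) = a powr (1/real d) * (W^d) powr (1/real d)"
    using assms by (simp add: powr_mult)
  moreover have "(W^d) powr (1/real d) = W"
    using assms by (simp add: powr_realpow[symmetric] powr_powr)
  ultimately show ?thesis by simp
qed

theorem lemma28:
  fixes q \<Delta> d :: nat and B :: real and R C :: "nat \<Rightarrow> real"
  assumes "0 \<le> B" "B < 1" "q \<ge> 3" "\<Delta> \<ge> 3" "d = \<Delta> - 1"
    and "potts_fixpoint q B d R C"
  shows "card (R ` {..<q}) \<le> 3 \<and> card (C ` {..<q}) \<le> 3 \<and>
         card (R ` {..<q}) = card (C ` {..<q})"
proof -
  note B0 = assms(1) and B1 = assms(2)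
  have d2: "d \<ge> 2" using assms(4,5) by simp
  have Rpos: "\<And>i. i < q \<Longrightarrow> R i > 0"
    using assms(6) unfolding potts_fixpoint_def by blast
  have Cpos: "\<And>j. j < q \<Longrightarrow> C j > 0"
    using assms(6) unfolding potts_fixpoint_def by blast
  obtain a where a: "a > 0" "\<And>i. i < q \<Longrightarrow> R i = a * (B * C i + (\<Sum>j\<in>{..<q}-{i}. C j)) ^ d"
    using assms(6) unfolding potts_fixpoint_def by blast
  obtain b where b: "b > 0" "\<And>j. j < q \<Longrightarrow> C j = b * (B * R j + (\<Sum>i\<in>{..<q}-{j}. R i)) ^ d"
    using assms(6) unfolding potts_fixpoint_def by blast
  define SC where "SC = (\<Sum>j<q. C j)"
  define SR where "SR = (\<Sum>j<q. R j)"
  have ne: "{..<q} - {i} \<noteq> {}" for i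
  proof -
    have "{0,1,2} \<subseteq> {..<q}" using assms(3) by auto
    then show ?thesis by (cases "i = 0") auto
  qed
  have oC: "(\<Sum>j\<in>{..<q}-{i}. C j) > 0" for i
    using ne[of i] Cpos by (intro sum_pos) auto
  have oR: "(\<Sum>j\<in>{..<q}-{i}. R j) > 0" for i
    using ne[of i] Rpos by (intro sum_pos) auto
  have WC: "SC - (1-B) * C i > 0" "R i = a * (SC - (1-B) * C i)^d" if "i < q" for i
  proof -
    have e: "B * C i + (\<Sum>j\<in>{..<q}-{i}. C j) = SC - (1-B) * C i"
      using that unfolding SC_def by (simp add: sum_diff1 algebra_simps)
    have "B * C i \<ge> 0" using B0 Cpos[OF that] by simp
    then show "SC - (1-B) * C i > 0" using oC[of i] e by linarith
    show "R i = a * (SC - (1-B) * C i)^d" using a(2)[OF that] e by simp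
  qed
  have WR: "SR - (1-B) * R i > 0" "C i = b * (SR - (1-B) * R i)^d" if "i < q" for i
  proof -
    have e: "B * R i + (\<Sum>j\<in>{..<q}-{i}. R j) = SR - (1-B) * R i"
      using that unfolding SR_def by (simp add: sum_diff1 algebra_simps)
    have "B * R i \<ge> 0" using B0 Rpos[OF that] by simp
    then show "SR - (1-B) * R i > 0" using oR[of i] e by linarith
    show "C i = b * (SR - (1-B) * R i)^d" using b(2)[OF that] e by simp
  qed
  define h where "h x = a * (SC - (1-B) * x)^d" for x
  have img: "R ` {..<q} = h ` (C ` {..<q})"
    unfolding image_image h_def using WC by (intro image_cong) auto
  have inj: "inj_on h (C ` {..<q})"
  proof (rule inj_onI)
    fix x y assume "x \<in> C ` {..<q}" "y \<in> C ` {..<q}" "h x = h y"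
    then obtain i j where ij: "i < q" "j < q" "x = C i" "y = C j" "h x = h y" by auto
    then have "(SC - (1-B) * C i)^d = (SC - (1-B) * C j)^d"
      using a(1) unfolding h_def by simp
    then have "SC - (1-B) * C i = SC - (1-B) * C j"
      using WC(1)[OF ij(1)] WC(1)[OF ij(2)] d2 power_eq_imp_eq_base[of "SC - (1-B) * C i" d "SC - (1-B) * C j"]
      by linarith
    then show "x = y" using ij B1 by simp
  qed
  have eqc: "card (R ` {..<q}) = card (C ` {..<q})"
    using img inj by (simp add: card_image)
  have le3: "card (R ` {..<q}) \<le> 3"
  proof (rule ccontr)
    assume "\<not> ?thesis"
    then have c4: "card (R ` {..<q}) \<ge> 4" by simp
    have fin: "finite (R ` {..<q})" by simp
    obtain y1 y2 y3 y4 where ys: "y1 \<in> R ` {..<q}" "y2 \<in> R ` {..<q}" "y3 \<in> R ` {..<q}"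
      "y4 \<in> R ` {..<q}" "y1 < y2" "y2 < y3" "y3 < y4"
      using four_sorted[OF fin c4] by blast
    define k where "k = 1 / ((1-B) * a powr (1/real d))"
    define F where "F y = SC/(1-B) - k * y powr (1/real d) - b * (SR - (1-B)*y)^d" for y
    have Fz: "F (R i) = 0" if "i < q" for i
    proof -
      have "R i powr (1/real d) = a powr (1/real d) * (SC - (1-B) * C i)"
        using WC[OF that] a(1) d2 root_lemma by simp
      then have "k * R i powr (1/real d) = (SC - (1-B) * C i) / (1-B)"
        unfolding k_def using a(1) by simp
      also have "\<dots> = SC/(1-B) - C i" using B1 by (simp add: field_simps)
      finally show ?thesis unfolding F_def using WR(2)[OF that] by simp
    qed
    show False
    proof (rule no4[of k b B d F "SC/(1-B)" SR y1 y2 y3 y4])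
      show "k > 0" unfolding k_def using a(1) B1 by simp
      show "b > 0" "B < 1" "d \<ge> 2" using b(1) B1 d2 by auto
      show "\<And>y. F y = SC/(1-B) - k * y powr (1/real d) - b * (SR - (1-B)*y)^d" by (simp add: F_def)
      show "0 < y1" using ys Rpos by auto
      show "y1 < y2" "y2 < y3" "y3 < y4" using ys by auto
      show "SR - (1-B)*y4 > 0" using ys(4) WR(1) by auto
      show "F y1 = 0" "F y2 = 0" "F y3 = 0" "F y4 = 0" using ys Fz by auto
    qed
  qed
  show ?thesis using le3 eqc by simp
qed

end
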